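(* Let $(X,d)$ be a metric space, $x_0\in X$, $n\geq 1$. For all $a,b,c\in\pi_n(X,x_0)$, $\rho(a,b)=\rho(ac,bc)=\rho(ca,cb)$.
   Context: $\Omega^n(X,x_0)$ is the set of continuous maps $\alpha:[0,1]^n\to X$ with $\alpha(\partial[0,1]^n)=\{x_0\}$, with uniform metric $\mu(\alpha,\beta)=\sup_{t\in[0,1]^n}d(\alpha(t),\beta(t))$. For $a,b\in\pi_n(X,x_0)$, $\rho(a,b)=\inf\{\mu(\alpha,\beta)\mid\alpha\in a,\beta\in b\}$. *)

theory Defs
  imports "HOL-Analysis.Analysis"
begin

text \<open>The unit cube [0,1]^n, realised inside nat => real (product topology):
  coordinates 0..n-1 range over [0,1], all other coordinates are 0.\<close>
definition cube :: "nat \<Rightarrow> (nat \<Rightarrow> real) set" where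
  "cube n = {t. (\<forall>i<n. 0 \<le> t i \<and> t i \<le> 1) \<and> (\<forall>i\<ge>n. t i = 0)}"

definition cube_boundary :: "nat \<Rightarrow> (nat \<Rightarrow> real) set" where
  "cube_boundary n = {t \<in> cube n. \<exists>i<n. t i = 0 \<or> t i = 1}"

definition Omega :: "nat \<Rightarrow> 'a::metric_space \<Rightarrow> ((nat \<Rightarrow> real) \<Rightarrow> 'a) set" where
  "Omega n x0 = {\<alpha>. continuous_on (cube n) \<alpha> \<and> \<alpha> ` cube_boundary n \<subseteq> {x0}}"

definition rel_homotopic :: "nat \<Rightarrow> 'a::metric_space \<Rightarrow> ((nat \<Rightarrow> real) \<Rightarrow> 'a) \<Rightarrow> ((nat \<Rightarrow> real) \<Rightarrow> 'a) \<Rightarrow> bool" where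
  "rel_homotopic n x0 \<alpha> \<beta> =
     homotopic_with_canon (\<lambda>h. h ` cube_boundary n \<subseteq> {x0}) (cube n) UNIV \<alpha> \<beta>"

definition homclass :: "nat \<Rightarrow> 'a::metric_space \<Rightarrow> ((nat \<Rightarrow> real) \<Rightarrow> 'a) \<Rightarrow> ((nat \<Rightarrow> real) \<Rightarrow> 'a) set" where
  "homclass n x0 \<alpha> = {\<beta> \<in> Omega n x0. rel_homotopic n x0 \<alpha> \<beta>}"

definition pi_n :: "nat \<Rightarrow> 'a::metric_space \<Rightarrow> ((nat \<Rightarrow> real) \<Rightarrow> 'a) set set" where
  "pi_n n x0 = homclass n x0 ` Omega n x0"

definition cube_concat :: "((nat \<Rightarrow> real) \<Rightarrow> 'a) \<Rightarrow> ((nat \<Rightarrow> real) \<Rightarrow> 'a) \<Rightarrow> (nat \<Rightarrow> real) \<Rightarrow> 'a" where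
  "cube_concat \<alpha> \<beta> = (\<lambda>t. if t 0 \<le> 1/2 then \<alpha> (t(0 := 2 * t 0)) else \<beta> (t(0 := 2 * t 0 - 1)))"

definition pi_mult :: "nat \<Rightarrow> 'a::metric_space \<Rightarrow> ((nat \<Rightarrow> real) \<Rightarrow> 'a) set \<Rightarrow> ((nat \<Rightarrow> real) \<Rightarrow> 'a) set \<Rightarrow> ((nat \<Rightarrow> real) \<Rightarrow> 'a) set" where
  "pi_mult n x0 a b = homclass n x0 (cube_concat (SOME \<alpha>. \<alpha> \<in> a) (SOME \<beta>. \<beta> \<in> b))"

definition mu :: "nat \<Rightarrow> ((nat \<Rightarrow> real) \<Rightarrow> 'a::metric_space) \<Rightarrow> ((nat \<Rightarrow> real) \<Rightarrow> 'a) \<Rightarrow> real" where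
  "mu n \<alpha> \<beta> = (SUP t\<in>cube n. dist (\<alpha> t) (\<beta> t))"

definition rho :: "nat \<Rightarrow> ((nat \<Rightarrow> real) \<Rightarrow> 'a::metric_space) set \<Rightarrow> ((nat \<Rightarrow> real) \<Rightarrow> 'a) set \<Rightarrow> real" where
  "rho n a b = Inf {mu n \<alpha> \<beta> | \<alpha> \<beta>. \<alpha> \<in> a \<and> \<beta> \<in> b}"

end

theory Submission
  imports Defs
begin

lemma relhom_intro:
  assumes "continuous_on ({0..1::real} \<times> cube n) H"
    "\<forall>t\<in>cube n. H(0,t) = p t" "\<forall>t\<in>cube n. H(1,t) = q t"
    "\<forall>s\<in>{0..1}. \<forall>t\<in>cube_boundary n. H(s,t) = x0"
  shows "rel_homotopic n x0 p q"
  unfolding rel_homotopic_def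
proof (subst homotopic_with, goal_cases)
  case (1 h k)
  have "cube_boundary n \<subseteq> cube n" unfolding cube_boundary_def by auto
  then show ?case using 1 by (auto simp: image_subset_iff) (metis subsetD)+
next
  case 2
  show ?case
    apply (rule exI[of _ H])
    using assms
    apply (intro conjI)
       apply simp
    by (auto simp: image_subset_iff)
qed

lemma relhom_elim:
  assumes "rel_homotopic n x0 p q"
  obtains H where "continuous_on ({0..1::real} \<times> cube n) H"
    "\<forall>t\<in>cube n. H(0,t) = p t" "\<forall>t\<in>cube n. H(1,t) = q t"
    "\<forall>s\<in>{0..1}. \<forall>t\<in>cube_boundary n. H(s,t) = x0"
proof -
  obtain h where "continuous_on ({0..1::real} \<times> cube n) h" "\<forall>x. h (0, x) = p x" "\<forall>x. h (1, x) = q x"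
     "\<forall>t\<in>{0..1}. \<forall>x\<in>cube_boundary n. h (t, x) = x0"
    using assms unfolding rel_homotopic_def homotopic_with_def
    by (auto simp: image_subset_iff)
  then show thesis using that by blast
qed

lemma relhom_refl: "\<alpha> \<in> Omega n x0 \<Longrightarrow> rel_homotopic n x0 \<alpha> \<alpha>"
  unfolding rel_homotopic_def Omega_def by auto

lemma relhom_sym: "rel_homotopic n x0 p q \<Longrightarrow> rel_homotopic n x0 q p"
  unfolding rel_homotopic_def by (rule homotopic_with_symD[where P="\<lambda>h. h ` cube_boundary n \<subseteq> {x0}"])

lemma relhom_trans: "rel_homotopic n x0 p q \<Longrightarrow> rel_homotopic n x0 q r \<Longrightarrow> rel_homotopic n x0 p r"
  unfolding rel_homotopic_def by (rule homotopic_with_trans[where P="\<lambda>h. h ` cube_boundary n \<subseteq> {x0}"])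

lemma relhom_Omega:
  assumes "rel_homotopic n x0 p q" shows "p \<in> Omega n x0 \<and> q \<in> Omega n x0"
proof -
  have h: "homotopic_with_canon (\<lambda>h. h ` cube_boundary n \<subseteq> {x0}) (cube n) UNIV p q"
    using assms unfolding rel_homotopic_def .
  show ?thesis using homotopic_with_imp_continuous[OF h] homotopic_with_imp_property[OF h]
    unfolding Omega_def by blast
qed

lemma upd_cube: "0<n \<Longrightarrow> t\<in>cube n \<Longrightarrow> v\<in>{0..1} \<Longrightarrow> t(0:=v) \<in> cube n"
  unfolding cube_def by auto

lemma upd_bdry2: "0<n \<Longrightarrow> t\<in>cube n \<Longrightarrow> v = 0 \<or> v = 1 \<Longrightarrow> t(0:=v) \<in> cube_boundary n"
  unfolding cube_boundary_def using upd_cube[of n t v] by auto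

lemma upd_bdry: 
  assumes "0<n" "t \<in> cube_boundary n" "v \<in> {0..1}" "t 0 = 0 \<or> t 0 = 1 \<Longrightarrow> v = 0 \<or> v = 1"
  shows "t(0:=v) \<in> cube_boundary n"
proof -
  obtain i where i: "i<n" "t i = 0 \<or> t i = 1" and tc: "t \<in> cube n" using assms(2) unfolding cube_boundary_def by auto
  show ?thesis
  proof (cases "i = 0")
    case True then show ?thesis using assms i tc upd_bdry2 by auto
  next
    case False
    have "t(0:=v) \<in> cube n" using upd_cube assms tc by auto
    moreover have "(t(0:=v)) i = 0 \<or> (t(0:=v)) i = 1" using False i by auto
    ultimately show ?thesis using i unfolding cube_boundary_def by blast
  qed
qed

lemma Omega_x0: "\<alpha> \<in> Omega n x0 \<Longrightarrow> t \<in> cube_boundary n \<Longrightarrow> \<alpha> t = x0"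
  unfolding Omega_def by auto

lemma Omega_cont: "\<alpha> \<in> Omega n x0 \<Longrightarrow> continuous_on (cube n) \<alpha>"
  unfolding Omega_def by auto

lemma cont_coord: "continuous_on S f \<Longrightarrow> continuous_on S (\<lambda>z. (f z :: nat \<Rightarrow> real) i)"
  by (rule continuous_on_compose2[OF continuous_on_product_coordinates]) auto

lemma cont_upd: "continuous_on S g \<Longrightarrow> continuous_on S h \<Longrightarrow> continuous_on S (\<lambda>x. ((g x)::nat \<Rightarrow> real)(0 := h x))"
proof (rule continuous_on_coordinatewise_then_product)
  fix i assume g: "continuous_on S g" and h: "continuous_on S h"
  show "continuous_on S (\<lambda>x. ((g x)(0 := h x)) i)"
  proof (cases "i = 0")
    case True then show ?thesis using h by simp
  next
    case False then show ?thesis using cont_coord[OF g, of i] by simp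
  qed
qed

lemma cont_comp_upd2:
  assumes K: "continuous_on (T \<times> cube n) K" and "continuous_on S a" "continuous_on S g" "continuous_on S \<phi>"
    and in_: "\<forall>z\<in>S. a z \<in> T \<and> g z \<in> cube n \<and> \<phi> z \<in> {0..1}" and n: "0<n"
  shows "continuous_on S (\<lambda>z. K(a z, (g z)(0:=\<phi> z)))"
proof -
  have "continuous_on S (\<lambda>z. (a z, (g z)(0:=\<phi> z)))"
    using assms by (intro continuous_on_Pair cont_upd) auto
  moreover have "(\<lambda>z. (a z, (g z)(0:=\<phi> z))) ` S \<subseteq> T \<times> cube n"
    using in_ upd_cube[OF n] by auto
  ultimately show ?thesis using continuous_on_compose2[OF K] by blast
qed

lemma cont_comp_upd:
  assumes K: "continuous_on (cube n) \<alpha>" and "continuous_on S g" "continuous_on S \<phi>"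
    and in_: "\<forall>z\<in>S. g z \<in> cube n \<and> \<phi> z \<in> {0..1}" and n: "0<n"
  shows "continuous_on S (\<lambda>z. \<alpha>((g z)(0:=\<phi> z)))"
proof -
  have "continuous_on S (\<lambda>z. (g z)(0:=\<phi> z))"
    using assms by (intro cont_upd) auto
  moreover have "(\<lambda>z. (g z)(0:=\<phi> z)) ` S \<subseteq> cube n"
    using in_ upd_cube[OF n] by auto
  ultimately show ?thesis using continuous_on_compose2[OF K] by blast
qed

lemma c_snd0: "continuous_on S snd"
  using continuous_on_snd[OF continuous_on_id] by simp

lemma c_fst0: "continuous_on S fst"
  using continuous_on_fst[OF continuous_on_id] by simp

lemma c_snd [continuous_intros]: "continuous_on S (\<lambda>z. (snd z :: nat \<Rightarrow> real) i)"
  by (rule cont_coord[OF c_snd0])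

lemma c_id [continuous_intros]: "continuous_on S (\<lambda>t::nat\<Rightarrow>real. t i)"
  by (rule cont_coord) (rule continuous_on_id)

lemma cube0: "0<n \<Longrightarrow> t \<in> cube n \<Longrightarrow> 0 \<le> t 0 \<and> t 0 \<le> 1"
  unfolding cube_def by auto

lemma bdry_cube: "t \<in> cube_boundary n \<Longrightarrow> t \<in> cube n"
  unfolding cube_boundary_def by auto

lemma Omega_upd: "\<alpha> \<in> Omega n x0 \<Longrightarrow> 0<n \<Longrightarrow> t \<in> cube_boundary n \<Longrightarrow> v \<in> {0..1} \<Longrightarrow>
   (t 0 = 0 \<or> t 0 = 1 \<Longrightarrow> v = 0 \<or> v = 1) \<Longrightarrow> \<alpha>(t(0:=v)) = x0"
  using upd_bdry Omega_x0 by metis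

lemma Omega_upd2: "\<alpha> \<in> Omega n x0 \<Longrightarrow> 0<n \<Longrightarrow> t \<in> cube n \<Longrightarrow> v = 0 \<or> v = 1 \<Longrightarrow> \<alpha>(t(0:=v)) = x0"
  using upd_bdry2 Omega_x0 by metis

lemma cont_concat_param:
  assumes F: "continuous_on (T \<times> cube n) F" and G: "continuous_on (T \<times> cube n) G" and n: "0<n"
    and j: "\<forall>s\<in>T. \<forall>t\<in>cube n. F(s, t(0:=1)) = G(s, t(0:=0))"
  shows "continuous_on (T \<times> cube n) (\<lambda>z. if snd z 0 \<le> 1/2 then F(fst z, (snd z)(0:=2 * snd z 0))
             else G(fst z, (snd z)(0:=2 * snd z 0 - 1)))"
proof (rule continuous_on_cases_le)
  show "continuous_on {z \<in> T \<times> cube n. snd z 0 \<le> 1/2} (\<lambda>z. F(fst z, (snd z)(0:=2 * snd z 0)))"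
    by (rule cont_comp_upd2[OF F c_fst0 c_snd0]) (intro continuous_intros, auto dest: cube0[OF n] simp: n)
  show "continuous_on {z \<in> T \<times> cube n. 1/2 \<le> snd z 0} (\<lambda>z. G(fst z, (snd z)(0:=2 * snd z 0 - 1)))"
    by (rule cont_comp_upd2[OF G c_fst0 c_snd0]) (intro continuous_intros, auto dest: cube0[OF n] simp: n)
  show "continuous_on (T \<times> cube n) (\<lambda>z. snd z 0)"
    by (rule c_snd)
  fix z assume "z \<in> T \<times> cube n" "snd z 0 = 1/2"
  then show "F(fst z, (snd z)(0:=2 * snd z 0)) = G(fst z, (snd z)(0:=2 * snd z 0 - 1))"
  proof (cases z)
    case (Pair a b)
    have "2 * b 0 = 1" "2 * b 0 - 1 = 0" using \<open>snd z 0 = 1/2\<close> Pair by auto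
    then show ?thesis using j Pair \<open>z \<in> T \<times> cube n\<close> by auto
  qed
qed

lemma concat_eq: "cube_concat \<alpha> \<gamma> = (\<lambda>z. if snd z 0 \<le> 1/2 then (\<lambda>z. \<alpha> (snd z))(fst z, (snd z)(0:=2 * snd z 0))
             else (\<lambda>z. \<gamma> (snd z))(fst z, (snd z)(0:=2 * snd z 0 - 1))) \<circ> Pair (0::real)"
  unfolding cube_concat_def by auto

lemma concat_cont:
  assumes "continuous_on (cube n) \<alpha>" "continuous_on (cube n) \<gamma>" "0<n"
    "\<forall>t\<in>cube n. \<alpha>(t(0:=1)) = \<gamma>(t(0:=0))"
  shows "continuous_on (cube n) (cube_concat \<alpha> \<gamma>)"
proof -
  have a: "continuous_on ({0::real} \<times> cube n) (\<lambda>z. \<alpha> (snd z))"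
    by (rule continuous_on_compose2[OF assms(1) c_snd0]) auto
  have g: "continuous_on ({0::real} \<times> cube n) (\<lambda>z. \<gamma> (snd z))"
    by (rule continuous_on_compose2[OF assms(2) c_snd0]) auto
  show ?thesis unfolding concat_eq
    by (rule continuous_on_o_Pair[OF cont_concat_param[OF a g assms(3)]]) (use assms(4) in auto)
qed

lemma concat_Omega:
  assumes "\<alpha> \<in> Omega n x0" "\<gamma> \<in> Omega n x0" "0<n"
  shows "cube_concat \<alpha> \<gamma> \<in> Omega n x0"
proof -
  have "continuous_on (cube n) (cube_concat \<alpha> \<gamma>)"
    using concat_cont[OF Omega_cont[OF assms(1)] Omega_cont[OF assms(2)] assms(3)]
      Omega_upd2[OF assms(1) assms(3)] Omega_upd2[OF assms(2) assms(3)] by auto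
  moreover have "cube_concat \<alpha> \<gamma> t = x0" if t: "t \<in> cube_boundary n" for t
  proof -
    have t01: "0 \<le> t 0" "t 0 \<le> 1" using cube0[OF assms(3) bdry_cube[OF t]] by auto
    show ?thesis
    proof (cases "t 0 \<le> 1/2")
      case True then show ?thesis unfolding cube_concat_def
        using Omega_upd[OF assms(1) assms(3) t, of "2 * t 0"] t01 by auto
    next
      case False then show ?thesis unfolding cube_concat_def
        using Omega_upd[OF assms(2) assms(3) t, of "2 * t 0 - 1"] t01 by auto
    qed
  qed
  ultimately show ?thesis unfolding Omega_def by auto
qed

definition rev0 :: "((nat \<Rightarrow> real) \<Rightarrow> 'a) \<Rightarrow> (nat \<Rightarrow> real) \<Rightarrow> 'a" where
  "rev0 \<gamma> = (\<lambda>t. \<gamma> (t(0 := 1 - t 0)))"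

lemma rev0_Omega:
  assumes "\<gamma> \<in> Omega n x0" "0<n"
  shows "rev0 \<gamma> \<in> Omega n x0"
proof -
  have "continuous_on (cube n) (rev0 \<gamma>)" unfolding rev0_def
    by (rule cont_comp_upd[OF Omega_cont[OF assms(1)] continuous_on_id]) 
       (auto intro: continuous_intros dest: cube0[OF assms(2)] simp: assms(2))
  moreover have "rev0 \<gamma> t = x0" if t: "t \<in> cube_boundary n" for t
    unfolding rev0_def using Omega_upd[OF assms(1) assms(2) t, of "1 - t 0"]
      cube0[OF assms(2) bdry_cube[OF t]] by auto
  ultimately show ?thesis unfolding Omega_def by auto
qed

lemma concat_cong:
  assumes n: "0<n" and ha: "rel_homotopic n x0 \<alpha> \<alpha>'" and hg: "rel_homotopic n x0 \<gamma> \<gamma>'"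
  shows "rel_homotopic n x0 (cube_concat \<alpha> \<gamma>) (cube_concat \<alpha>' \<gamma>')"
proof -
  obtain F where F: "continuous_on ({0..1::real} \<times> cube n) F"
    "\<forall>t\<in>cube n. F(0,t) = \<alpha> t" "\<forall>t\<in>cube n. F(1,t) = \<alpha>' t"
    "\<forall>s\<in>{0..1}. \<forall>t\<in>cube_boundary n. F(s,t) = x0" using relhom_elim[OF ha] by blast
  obtain G where G: "continuous_on ({0..1::real} \<times> cube n) G"
    "\<forall>t\<in>cube n. G(0,t) = \<gamma> t" "\<forall>t\<in>cube n. G(1,t) = \<gamma>' t"
    "\<forall>s\<in>{0..1}. \<forall>t\<in>cube_boundary n. G(s,t) = x0" using relhom_elim[OF hg] by blast
  have j: "\<forall>s\<in>{0..1}. \<forall>t\<in>cube n. F(s, t(0:=1)) = G(s, t(0:=0))"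
    using F(4) G(4) upd_bdry2[OF n] by auto
  show ?thesis
  proof (rule relhom_intro[OF cont_concat_param[OF F(1) G(1) n j]])
    show "\<forall>t\<in>cube n. (if snd (0::real, t) 0 \<le> 1 / 2 then F (fst (0::real, t), (snd (0::real, t))(0 := 2 * snd (0::real, t) 0))
          else G (fst (0::real, t), (snd (0::real, t))(0 := 2 * snd (0::real, t) 0 - 1))) = cube_concat \<alpha> \<gamma> t"
      using F(2) G(2) upd_cube[OF n] cube0[OF n] unfolding cube_concat_def by auto
    show "\<forall>t\<in>cube n. (if snd (1::real, t) 0 \<le> 1 / 2 then F (fst (1::real, t), (snd (1::real, t))(0 := 2 * snd (1::real, t) 0))
          else G (fst (1::real, t), (snd (1::real, t))(0 := 2 * snd (1::real, t) 0 - 1))) = cube_concat \<alpha>' \<gamma>' t"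
      using F(3) G(3) upd_cube[OF n] cube0[OF n] unfolding cube_concat_def by auto
    show "\<forall>s\<in>{0..1}. \<forall>t\<in>cube_boundary n. (if snd (s, t) 0 \<le> 1 / 2 then F (fst (s, t), (snd (s, t))(0 := 2 * snd (s, t) 0))
          else G (fst (s, t), (snd (s, t))(0 := 2 * snd (s, t) 0 - 1))) = x0"
    proof (intro ballI)
      fix s t assume s: "s \<in> {0..1::real}" and t: "t \<in> cube_boundary n"
      have t01: "0 \<le> t 0" "t 0 \<le> 1" using cube0[OF n bdry_cube[OF t]] by auto
      have "F(s, t(0:=2*t 0)) = x0" if "t 0 \<le> 1/2"
        using F(4) s upd_bdry[OF n t, of "2 * t 0"] t01 that by auto
      moreover have "G(s, t(0:=2*t 0 - 1)) = x0" if "\<not> t 0 \<le> 1/2"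
        using G(4) s upd_bdry[OF n t, of "2 * t 0 - 1"] t01 that by auto
      ultimately show "(if snd (s, t) 0 \<le> 1 / 2 then F (fst (s, t), (snd (s, t))(0 := 2 * snd (s, t) 0))
          else G (fst (s, t), (snd (s, t))(0 := 2 * snd (s, t) 0 - 1))) = x0" by auto
    qed
  qed
qed

lemma conv01: "(s::real) \<in> {0..1} \<Longrightarrow> a \<in> {0..1} \<Longrightarrow> b \<in> {0..1} \<Longrightarrow> (1 - s) * a + s * b \<in> {0..1}"
proof -
  assume s: "s \<in> {0..1}" and a: "a \<in> {0..1}" and b: "b \<in> {0..1}"
  have "(1 - s) * a \<le> (1 - s) * 1" "s * b \<le> s * 1" using s a b by (intro mult_left_mono; auto)+
  moreover have "0 \<le> (1 - s) * a" "0 \<le> s * b" using s a b by auto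
  ultimately show ?thesis by auto
qed

lemma reparam:
  assumes a: "\<alpha> \<in> Omega n x0" and n: "0<n" and pc: "continuous_on {0..1} \<phi>"
    and pr: "\<forall>u\<in>{0..1}. \<phi> u \<in> {0..1}" and p0: "\<phi> 0 = 0" and p1: "\<phi> 1 = 1"
  shows "rel_homotopic n x0 (\<lambda>t. \<alpha>(t(0:=\<phi>(t 0)))) \<alpha>"
proof -
  define H where "H = (\<lambda>z::real \<times> (nat \<Rightarrow> real). \<alpha>((snd z)(0 := (1 - fst z) * \<phi>(snd z 0) + fst z * snd z 0)))"
  have inr: "(1 - s) * \<phi>(t 0) + s * t 0 \<in> {0..1}" if "s \<in> {0..1}" "t \<in> cube n" for s t
    using conv01[OF that(1), of "\<phi>(t 0)" "t 0"] pr cube0[OF n that(2)] by auto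
  have c: "continuous_on ({0..1} \<times> cube n) H" unfolding H_def
  proof (rule cont_comp_upd[OF Omega_cont[OF a] c_snd0])
    have "continuous_on ({0..1::real} \<times> cube n) (\<lambda>z. \<phi>(snd z 0))"
      by (rule continuous_on_compose2[OF pc c_snd]) (auto dest: cube0[OF n])
    then show "continuous_on ({0..1} \<times> cube n) (\<lambda>z. (1 - fst z) * \<phi>(snd z 0) + fst z * snd z 0)"
      by (intro continuous_intros c_fst0)
    show "\<forall>z\<in>{0..1} \<times> cube n. snd z \<in> cube n \<and> (1 - fst z) * \<phi> (snd z 0) + fst z * snd z 0 \<in> {0..1}"
      using inr by auto
  qed (rule n)
  show ?thesis
  proof (rule relhom_intro[OF c])
    show "\<forall>t\<in>cube n. H (0, t) = \<alpha> (t(0 := \<phi> (t 0)))" unfolding H_def by simp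
    show "\<forall>t\<in>cube n. H (1, t) = \<alpha> t" unfolding H_def by simp
    show "\<forall>s\<in>{0..1}. \<forall>t\<in>cube_boundary n. H (s, t) = x0"
    proof (intro ballI)
      fix s t assume s: "s \<in> {0..1::real}" and t: "t \<in> cube_boundary n"
      show "H (s, t) = x0" unfolding H_def using inr[OF s bdry_cube[OF t]]
        by (auto intro!: Omega_upd[OF a n t] simp: p0 p1)
    qed
  qed
qed

lemma cancel_left1:
  assumes a: "\<alpha> \<in> Omega n x0" and g: "\<gamma> \<in> Omega n x0" and n: "0<n"
  shows "rel_homotopic n x0 (cube_concat (cube_concat \<alpha> \<gamma>) (rev0 \<gamma>)) (\<lambda>t. \<alpha>(t(0:=min 1 (4 * t 0))))"
proof -
  define H where "H = (\<lambda>z::real \<times> (nat \<Rightarrow> real). if snd z 0 \<le> 1/4 then \<alpha>((snd z)(0:=4 * snd z 0))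
     else \<gamma>((snd z)(0:= max 0 (min (4 * snd z 0 - 1) (2 - 2 * snd z 0) - fst z))))"
  have c: "continuous_on ({0..1} \<times> cube n) H" unfolding H_def
  proof (rule continuous_on_cases_le)
    show "continuous_on {z \<in> {0..1} \<times> cube n. snd z 0 \<le> 1/4} (\<lambda>z. \<alpha>((snd z)(0:=4 * snd z 0)))"
      by (rule cont_comp_upd[OF Omega_cont[OF a] c_snd0]) (intro continuous_intros, auto dest: cube0[OF n] simp: n)
    show "continuous_on {z \<in> {0..1} \<times> cube n. 1/4 \<le> snd z 0} (\<lambda>z. \<gamma>((snd z)(0:= max 0 (min (4 * snd z 0 - 1) (2 - 2 * snd z 0) - fst z))))"
      by (rule cont_comp_upd[OF Omega_cont[OF g] c_snd0]) (intro continuous_intros c_fst0, auto dest: cube0[OF n] simp: n)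
    show "continuous_on ({0..1} \<times> cube n) (\<lambda>z. snd z 0)" by (rule c_snd)
  next
    fix z :: "real \<times> (nat \<Rightarrow> real)" assume z: "z \<in> {0..1} \<times> cube n" "snd z 0 = 1/4"
    have e1: "4 * snd z 0 = 1" and e2: "max 0 (min (4 * snd z 0 - 1) (2 - 2 * snd z 0) - fst z) = 0"
      using z by auto
    show "\<alpha>((snd z)(0:=4 * snd z 0)) = \<gamma>((snd z)(0:= max 0 (min (4 * snd z 0 - 1) (2 - 2 * snd z 0) - fst z)))"
      unfolding e1 e2 using Omega_upd2[OF a n] Omega_upd2[OF g n] z by auto
  qed
  show ?thesis
  proof (rule relhom_intro[OF c])
    show "\<forall>t\<in>cube n. H (0, t) = cube_concat (cube_concat \<alpha> \<gamma>) (rev0 \<gamma>) t"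
    proof
      fix t assume t: "t \<in> cube n"
      have t01: "0 \<le> t 0" "t 0 \<le> 1" using cube0[OF n t] by auto
      consider "t 0 \<le> 1/4" | "1/4 < t 0" "t 0 \<le> 1/2" | "1/2 < t 0" by linarith
      then show "H (0, t) = cube_concat (cube_concat \<alpha> \<gamma>) (rev0 \<gamma>) t"
      proof cases
        case 1
        then show ?thesis unfolding H_def cube_concat_def by (simp add: mult.assoc)
      next
        case 2
        have "max 0 (min (4 * t 0 - 1) (2 - 2 * t 0) - 0) = 2 * (2 * t 0) - 1" using 2 by auto
        then show ?thesis using 2 unfolding H_def cube_concat_def by simp
      next
        case 3
        have "max 0 (min (4 * t 0 - 1) (2 - 2 * t 0) - 0) = 1 - (2 * t 0 - 1)" using 3 t01 by auto
        then show ?thesis using 3 unfolding H_def cube_concat_def rev0_def by simp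
      qed
    qed
    show "\<forall>t\<in>cube n. H (1, t) = \<alpha> (t(0 := min 1 (4 * t 0)))"
    proof
      fix t assume t: "t \<in> cube n"
      have t01: "0 \<le> t 0" "t 0 \<le> 1" using cube0[OF n t] by auto
      show "H (1, t) = \<alpha> (t(0 := min 1 (4 * t 0)))"
      proof (cases "t 0 \<le> 1/4")
        case True
        then show ?thesis unfolding H_def by simp
      next
        case False
        have "max 0 (min (4 * t 0 - 1) (2 - 2 * t 0) - 1) = 0" "min 1 (4 * t 0) = 1" using False t01 by auto
        then show ?thesis using False Omega_upd2[OF a n t] Omega_upd2[OF g n t] unfolding H_def by simp
      qed
    qed
    show "\<forall>s\<in>{0..1}. \<forall>t\<in>cube_boundary n. H (s, t) = x0"
    proof (intro ballI)
      fix s t assume s: "s \<in> {0..1::real}" and t: "t \<in> cube_boundary n"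
      have t01: "0 \<le> t 0" "t 0 \<le> 1" using cube0[OF n bdry_cube[OF t]] by auto
      show "H (s, t) = x0"
      proof (cases "t 0 \<le> 1/4")
        case True
        then show ?thesis unfolding H_def using t01 by (auto intro!: Omega_upd[OF a n t])
      next
        case False
        then show ?thesis unfolding H_def using t01 s by (auto intro!: Omega_upd[OF g n t])
      qed
    qed
  qed
qed

lemma cancel_right1:
  assumes a: "\<alpha> \<in> Omega n x0" and g: "\<gamma> \<in> Omega n x0" and n: "0<n"
  shows "rel_homotopic n x0 (cube_concat (rev0 \<gamma>) (cube_concat \<gamma> \<alpha>)) (\<lambda>t. \<alpha>(t(0:=max 0 (4 * t 0 - 3))))"
proof -
  define H where "H = (\<lambda>z::real \<times> (nat \<Rightarrow> real). if snd z 0 \<le> 3/4 then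
       \<gamma>((snd z)(0:= min 1 (max (1 - 2 * snd z 0) (4 * snd z 0 - 2) + fst z)))
     else \<alpha>((snd z)(0:=4 * snd z 0 - 3)))"
  have c: "continuous_on ({0..1} \<times> cube n) H" unfolding H_def
  proof (rule continuous_on_cases_le)
    show "continuous_on {z \<in> {0..1} \<times> cube n. snd z 0 \<le> 3/4} (\<lambda>z. \<gamma>((snd z)(0:= min 1 (max (1 - 2 * snd z 0) (4 * snd z 0 - 2) + fst z))))"
      by (rule cont_comp_upd[OF Omega_cont[OF g] c_snd0]) (intro continuous_intros c_fst0, auto dest: cube0[OF n] simp: n)
    show "continuous_on {z \<in> {0..1} \<times> cube n. 3/4 \<le> snd z 0} (\<lambda>z. \<alpha>((snd z)(0:=4 * snd z 0 - 3)))"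
      by (rule cont_comp_upd[OF Omega_cont[OF a] c_snd0]) (intro continuous_intros, auto dest: cube0[OF n] simp: n)
    show "continuous_on ({0..1} \<times> cube n) (\<lambda>z. snd z 0)" by (rule c_snd)
  next
    fix z :: "real \<times> (nat \<Rightarrow> real)" assume z: "z \<in> {0..1} \<times> cube n" "snd z 0 = 3/4"
    have e1: "4 * snd z 0 - 3 = 0" and e2: "min 1 (max (1 - 2 * snd z 0) (4 * snd z 0 - 2) + fst z) = 1"
      using z by auto
    show "\<gamma>((snd z)(0:= min 1 (max (1 - 2 * snd z 0) (4 * snd z 0 - 2) + fst z))) = \<alpha>((snd z)(0:=4 * snd z 0 - 3))"
      unfolding e1 e2 using Omega_upd2[OF a n] Omega_upd2[OF g n] z by auto
  qed
  show ?thesis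
  proof (rule relhom_intro[OF c])
    show "\<forall>t\<in>cube n. H (0, t) = cube_concat (rev0 \<gamma>) (cube_concat \<gamma> \<alpha>) t"
    proof
      fix t assume t: "t \<in> cube n"
      have t01: "0 \<le> t 0" "t 0 \<le> 1" using cube0[OF n t] by auto
      consider "t 0 \<le> 1/2" | "1/2 < t 0" "t 0 \<le> 3/4" | "3/4 < t 0" by linarith
      then show "H (0, t) = cube_concat (rev0 \<gamma>) (cube_concat \<gamma> \<alpha>) t"
      proof cases
        case 1
        have "min 1 (max (1 - 2 * t 0) (4 * t 0 - 2) + 0) = 1 - 2 * t 0" using 1 t01 by auto
        then show ?thesis using 1 unfolding H_def cube_concat_def rev0_def by simp
      next
        case 2
        have "min 1 (max (1 - 2 * t 0) (4 * t 0 - 2) + 0) = 2 * (2 * t 0 - 1)" using 2 by auto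
        moreover have "2 * t 0 - 1 \<le> 1/2" using 2 by auto
        ultimately show ?thesis using 2 unfolding H_def cube_concat_def by simp
      next
        case 3
        have "4 * t 0 - 3 = 2 * (2 * t 0 - 1) - 1" by simp
        moreover have "\<not> 2 * t 0 - 1 \<le> 1/2" using 3 by auto
        ultimately show ?thesis using 3 unfolding H_def cube_concat_def by simp
      qed
    qed
    show "\<forall>t\<in>cube n. H (1, t) = \<alpha> (t(0 := max 0 (4 * t 0 - 3)))"
    proof
      fix t assume t: "t \<in> cube n"
      have t01: "0 \<le> t 0" "t 0 \<le> 1" using cube0[OF n t] by auto
      show "H (1, t) = \<alpha> (t(0 := max 0 (4 * t 0 - 3)))"
      proof (cases "t 0 \<le> 3/4")
        case False
        then show ?thesis unfolding H_def by simp
      next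
        case True
        have "min 1 (max (1 - 2 * t 0) (4 * t 0 - 2) + 1) = 1" "max 0 (4 * t 0 - 3) = 0" using True t01 by auto
        then show ?thesis using True Omega_upd2[OF a n t] Omega_upd2[OF g n t] unfolding H_def by simp
      qed
    qed
    show "\<forall>s\<in>{0..1}. \<forall>t\<in>cube_boundary n. H (s, t) = x0"
    proof (intro ballI)
      fix s t assume s: "s \<in> {0..1::real}" and t: "t \<in> cube_boundary n"
      have t01: "0 \<le> t 0" "t 0 \<le> 1" using cube0[OF n bdry_cube[OF t]] by auto
      show "H (s, t) = x0"
      proof (cases "t 0 \<le> 3/4")
        case True
        then show ?thesis unfolding H_def using t01 s by (auto intro!: Omega_upd[OF g n t])
      next
        case False
        then show ?thesis unfolding H_def using t01 by (auto intro!: Omega_upd[OF a n t])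
      qed
    qed
  qed
qed

lemma cancel_left:
  assumes a: "\<alpha> \<in> Omega n x0" and g: "\<gamma> \<in> Omega n x0" and n: "0<n"
  shows "rel_homotopic n x0 (cube_concat (cube_concat \<alpha> \<gamma>) (rev0 \<gamma>)) \<alpha>"
proof (rule relhom_trans[OF cancel_left1[OF a g n] reparam[OF a n]])
  show "continuous_on {0..1} (\<lambda>u::real. min 1 (4 * u))" by (intro continuous_intros)
qed auto

lemma cancel_right:
  assumes a: "\<alpha> \<in> Omega n x0" and g: "\<gamma> \<in> Omega n x0" and n: "0<n"
  shows "rel_homotopic n x0 (cube_concat (rev0 \<gamma>) (cube_concat \<gamma> \<alpha>)) \<alpha>"
proof (rule relhom_trans[OF cancel_right1[OF a g n] reparam[OF a n]])
  show "continuous_on {0..1} (\<lambda>u::real. max 0 (4 * u - 3))" by (intro continuous_intros)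
qed auto

lemma mu_right:
  assumes a: "\<alpha> \<in> Omega n x0" and b: "\<beta> \<in> Omega n x0" and g: "\<gamma> \<in> Omega n x0" and n: "0<n"
  shows "mu n (cube_concat \<alpha> \<gamma>) (cube_concat \<beta> \<gamma>) = mu n \<alpha> \<beta>"
proof -
  have "(\<lambda>t. dist (cube_concat \<alpha> \<gamma> t) (cube_concat \<beta> \<gamma> t)) ` cube n = (\<lambda>t. dist (\<alpha> t) (\<beta> t)) ` cube n"
  proof (intro equalityI subsetI)
    fix x assume "x \<in> (\<lambda>t. dist (cube_concat \<alpha> \<gamma> t) (cube_concat \<beta> \<gamma> t)) ` cube n"
    then obtain t where t: "t \<in> cube n" and x: "x = dist (cube_concat \<alpha> \<gamma> t) (cube_concat \<beta> \<gamma> t)" by auto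
    have t01: "0 \<le> t 0" "t 0 \<le> 1" using cube0[OF n t] by auto
    show "x \<in> (\<lambda>t. dist (\<alpha> t) (\<beta> t)) ` cube n"
    proof (cases "t 0 \<le> 1/2")
      case True
      then have "x = dist (\<alpha> (t(0:=2 * t 0))) (\<beta> (t(0:=2 * t 0)))" unfolding x cube_concat_def by simp
      moreover have "t(0:=2 * t 0) \<in> cube n" using upd_cube[OF n t] True t01 by auto
      ultimately show ?thesis by blast
    next
      case False
      then have "x = dist (\<alpha> (t(0:=1))) (\<beta> (t(0:=1)))" unfolding x cube_concat_def
        using Omega_upd2[OF a n t] Omega_upd2[OF b n t] by simp
      moreover have "t(0:=1) \<in> cube n" using upd_cube[OF n t] by auto
      ultimately show ?thesis by blast
    qed
  next
    fix x assume "x \<in> (\<lambda>t. dist (\<alpha> t) (\<beta> t)) ` cube n"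
    then obtain t where t: "t \<in> cube n" and x: "x = dist (\<alpha> t) (\<beta> t)" by auto
    have t01: "0 \<le> t 0" "t 0 \<le> 1" using cube0[OF n t] by auto
    let ?t = "t(0 := t 0 / 2)"
    have tc: "?t \<in> cube n" using upd_cube[OF n t] t01 by auto
    have e: "?t(0 := 2 * ?t 0) = t" by auto
    have le: "?t 0 \<le> 1/2" using t01 by auto
    have c1: "cube_concat f g ?t = f t" for f g :: "(nat \<Rightarrow> real) \<Rightarrow> 'a"
      unfolding cube_concat_def by (simp only: le e if_True)
    show "x \<in> (\<lambda>t. dist (cube_concat \<alpha> \<gamma> t) (cube_concat \<beta> \<gamma> t)) ` cube n"
      by (rule image_eqI[OF _ tc]) (simp only: x c1)
  qed
  then show ?thesis unfolding mu_def by simp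
qed

lemma mu_left:
  assumes a: "\<alpha> \<in> Omega n x0" and b: "\<beta> \<in> Omega n x0" and g: "\<gamma> \<in> Omega n x0" and n: "0<n"
  shows "mu n (cube_concat \<gamma> \<alpha>) (cube_concat \<gamma> \<beta>) = mu n \<alpha> \<beta>"
proof -
  have "(\<lambda>t. dist (cube_concat \<gamma> \<alpha> t) (cube_concat \<gamma> \<beta> t)) ` cube n = (\<lambda>t. dist (\<alpha> t) (\<beta> t)) ` cube n"
  proof (intro equalityI subsetI)
    fix x assume "x \<in> (\<lambda>t. dist (cube_concat \<gamma> \<alpha> t) (cube_concat \<gamma> \<beta> t)) ` cube n"
    then obtain t where t: "t \<in> cube n" and x: "x = dist (cube_concat \<gamma> \<alpha> t) (cube_concat \<gamma> \<beta> t)" by auto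
    have t01: "0 \<le> t 0" "t 0 \<le> 1" using cube0[OF n t] by auto
    show "x \<in> (\<lambda>t. dist (\<alpha> t) (\<beta> t)) ` cube n"
    proof (cases "t 0 \<le> 1/2")
      case False
      then have "x = dist (\<alpha> (t(0:=2 * t 0 - 1))) (\<beta> (t(0:=2 * t 0 - 1)))" unfolding x cube_concat_def by simp
      moreover have "t(0:=2 * t 0 - 1) \<in> cube n" using upd_cube[OF n t] False t01 by auto
      ultimately show ?thesis by blast
    next
      case True
      then have "x = dist (\<alpha> (t(0:=0))) (\<beta> (t(0:=0)))" unfolding x cube_concat_def
        using Omega_upd2[OF a n t] Omega_upd2[OF b n t] by simp
      moreover have "t(0:=0) \<in> cube n" using upd_cube[OF n t] by auto
      ultimately show ?thesis by blast
    qed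
  next
    fix x assume "x \<in> (\<lambda>t. dist (\<alpha> t) (\<beta> t)) ` cube n"
    then obtain t where t: "t \<in> cube n" and x: "x = dist (\<alpha> t) (\<beta> t)" by auto
    have t01: "0 \<le> t 0" "t 0 \<le> 1" using cube0[OF n t] by auto
    show "x \<in> (\<lambda>t. dist (cube_concat \<gamma> \<alpha> t) (cube_concat \<gamma> \<beta> t)) ` cube n"
    proof (cases "t 0 = 0")
      case True
      have tt: "t(0:=0) = t" using True by auto
      have "x = 0" unfolding x using Omega_upd2[OF a n t, of 0] Omega_upd2[OF b n t, of 0] tt by simp
      moreover have "dist (cube_concat \<gamma> \<alpha> t) (cube_concat \<gamma> \<beta> t) = 0"
        unfolding cube_concat_def using True by simp
      ultimately show ?thesis using t by (intro image_eqI[OF _ t]) simp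
    next
      case False
      let ?t = "t(0 := (t 0 + 1) / 2)"
      have tc: "?t \<in> cube n" using upd_cube[OF n t] t01 by auto
      have e0: "(2 * t 0 + 2) / 2 - 1 = t 0" by (simp add: field_simps)
      have e: "?t(0 := 2 * ?t 0 - 1) = t" by (simp add: e0)
      have le: "\<not> ?t 0 \<le> 1/2" using t01 False by auto
      have c1: "cube_concat f g ?t = g t" for f g :: "(nat \<Rightarrow> real) \<Rightarrow> 'a"
        unfolding cube_concat_def by (simp only: le e if_False)
      show ?thesis
        by (rule image_eqI[OF _ tc]) (simp only: x c1)
    qed
  qed
  then show ?thesis unfolding mu_def by simp
qed

lemma homclass_eq: "rel_homotopic n x0 p q \<Longrightarrow> homclass n x0 p = homclass n x0 q"
  unfolding homclass_def using relhom_sym relhom_trans by blast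

lemma class_Omega: "a \<in> pi_n n x0 \<Longrightarrow> \<alpha> \<in> a \<Longrightarrow> \<alpha> \<in> Omega n x0"
  unfolding pi_n_def homclass_def by auto

lemma class_rep: "a \<in> pi_n n x0 \<Longrightarrow> \<alpha> \<in> a \<Longrightarrow> a = homclass n x0 \<alpha>"
  unfolding pi_n_def using homclass_eq unfolding homclass_def by blast

lemma class_ne: "a \<in> pi_n n x0 \<Longrightarrow> \<exists>\<alpha>. \<alpha> \<in> a"
  unfolding pi_n_def homclass_def using relhom_refl by blast

lemma in_homclass: "\<alpha> \<in> Omega n x0 \<Longrightarrow> \<alpha> \<in> homclass n x0 \<alpha>"
  unfolding homclass_def using relhom_refl by blast

lemma pimult_rep:
  assumes n: "0<n" and a: "a \<in> pi_n n x0" and c: "c \<in> pi_n n x0" and al: "\<alpha> \<in> a" and ga: "\<gamma> \<in> c"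
  shows "pi_mult n x0 a c = homclass n x0 (cube_concat \<alpha> \<gamma>)"
proof -
  have a0: "(SOME \<alpha>. \<alpha> \<in> a) \<in> a" using class_ne[OF a] by (metis someI)
  have c0: "(SOME \<alpha>. \<alpha> \<in> c) \<in> c" using class_ne[OF c] by (metis someI)
  have h1: "rel_homotopic n x0 (SOME \<alpha>. \<alpha> \<in> a) \<alpha>"
    using al class_rep[OF a a0] unfolding homclass_def by auto
  have h2: "rel_homotopic n x0 (SOME \<alpha>. \<alpha> \<in> c) \<gamma>"
    using ga class_rep[OF c c0] unfolding homclass_def by auto
  show ?thesis unfolding pi_mult_def by (rule homclass_eq[OF concat_cong[OF n h1 h2]])
qed

lemma rho_right:
  assumes n: "0<n" and a: "a \<in> pi_n n x0" and b: "b \<in> pi_n n x0" and c: "c \<in> pi_n n x0"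
  shows "rho n a b = rho n (pi_mult n x0 a c) (pi_mult n x0 b c)"
proof -
  obtain \<alpha> where al: "\<alpha> \<in> a" using class_ne[OF a] by (elim exE)
  obtain \<beta> where be: "\<beta> \<in> b" using class_ne[OF b] by (elim exE)
  obtain \<gamma> where ga: "\<gamma> \<in> c" using class_ne[OF c] by (elim exE)
  have gO: "\<gamma> \<in> Omega n x0" using class_Omega[OF c ga] .
  have rgO: "rev0 \<gamma> \<in> Omega n x0" using rev0_Omega[OF gO n] .
  have bk: "cube_concat A1 (rev0 \<gamma>) \<in> A" if H1: "A1 \<in> pi_mult n x0 A c" and H2: "A0 \<in> A"
    and H3: "A \<in> pi_n n x0" for A A0 A1
  proof -
    have aO: "A0 \<in> Omega n x0" using class_Omega[OF H3 H2] .
    have "A1 \<in> homclass n x0 (cube_concat A0 \<gamma>)" using H1 pimult_rep[OF n H3 c H2 ga] by simp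
    then have a'O: "A1 \<in> Omega n x0" and h: "rel_homotopic n x0 (cube_concat A0 \<gamma>) A1"
      unfolding homclass_def by auto
    have "rel_homotopic n x0 A0 (cube_concat (cube_concat A0 \<gamma>) (rev0 \<gamma>))"
      using relhom_sym[OF cancel_left[OF aO gO n]] .
    moreover have "rel_homotopic n x0 (cube_concat (cube_concat A0 \<gamma>) (rev0 \<gamma>)) (cube_concat A1 (rev0 \<gamma>))"
      using concat_cong[OF n h relhom_refl[OF rgO]] .
    ultimately have "rel_homotopic n x0 A0 (cube_concat A1 (rev0 \<gamma>))" by (rule relhom_trans)
    then have "cube_concat A1 (rev0 \<gamma>) \<in> homclass n x0 A0"
      unfolding homclass_def using concat_Omega[OF a'O rgO n] by auto
    then show ?thesis using class_rep[OF H3 H2] by simp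
  qed
  have "{mu n \<alpha> \<beta> | \<alpha> \<beta>. \<alpha> \<in> a \<and> \<beta> \<in> b} = {mu n \<alpha> \<beta> | \<alpha> \<beta>. \<alpha> \<in> pi_mult n x0 a c \<and> \<beta> \<in> pi_mult n x0 b c}"
  proof (intro equalityI subsetI)
    fix x assume "x \<in> {mu n \<alpha> \<beta> | \<alpha> \<beta>. \<alpha> \<in> a \<and> \<beta> \<in> b}"
    then obtain \<alpha>1 \<beta>1 where x: "x = mu n \<alpha>1 \<beta>1" and a1: "\<alpha>1 \<in> a" and b1: "\<beta>1 \<in> b" by auto
    have a1O: "\<alpha>1 \<in> Omega n x0" using class_Omega[OF a a1] .
    have b1O: "\<beta>1 \<in> Omega n x0" using class_Omega[OF b b1] .
    have "cube_concat \<alpha>1 \<gamma> \<in> pi_mult n x0 a c"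
      using pimult_rep[OF n a c a1 ga] in_homclass[OF concat_Omega[OF a1O gO n]] by simp
    moreover have "cube_concat \<beta>1 \<gamma> \<in> pi_mult n x0 b c"
      using pimult_rep[OF n b c b1 ga] in_homclass[OF concat_Omega[OF b1O gO n]] by simp
    moreover have "x = mu n (cube_concat \<alpha>1 \<gamma>) (cube_concat \<beta>1 \<gamma>)"
      using mu_right[OF a1O b1O gO n] x by simp
    ultimately show "x \<in> {mu n \<alpha> \<beta> | \<alpha> \<beta>. \<alpha> \<in> pi_mult n x0 a c \<and> \<beta> \<in> pi_mult n x0 b c}" by blast
  next
    fix x assume "x \<in> {mu n \<alpha> \<beta> | \<alpha> \<beta>. \<alpha> \<in> pi_mult n x0 a c \<and> \<beta> \<in> pi_mult n x0 b c}"
    then obtain \<alpha>1 \<beta>1 where x: "x = mu n \<alpha>1 \<beta>1" and a1: "\<alpha>1 \<in> pi_mult n x0 a c" and b1: "\<beta>1 \<in> pi_mult n x0 b c" by auto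
    have a1O: "\<alpha>1 \<in> Omega n x0" using a1 pimult_rep[OF n a c al ga] unfolding homclass_def by auto
    have b1O: "\<beta>1 \<in> Omega n x0" using b1 pimult_rep[OF n b c be ga] unfolding homclass_def by auto
    have "x = mu n (cube_concat \<alpha>1 (rev0 \<gamma>)) (cube_concat \<beta>1 (rev0 \<gamma>))"
      using mu_right[OF a1O b1O rgO n] x by simp
    then show "x \<in> {mu n \<alpha> \<beta> | \<alpha> \<beta>. \<alpha> \<in> a \<and> \<beta> \<in> b}"
      using bk[OF a1 al a] bk[OF b1 be b] by blast
  qed
  then show ?thesis unfolding rho_def by simp
qed

lemma rho_left:
  assumes n: "0<n" and a: "a \<in> pi_n n x0" and b: "b \<in> pi_n n x0" and c: "c \<in> pi_n n x0"
  shows "rho n a b = rho n (pi_mult n x0 c a) (pi_mult n x0 c b)"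
proof -
  obtain \<alpha> where al: "\<alpha> \<in> a" using class_ne[OF a] by (elim exE)
  obtain \<beta> where be: "\<beta> \<in> b" using class_ne[OF b] by (elim exE)
  obtain \<gamma> where ga: "\<gamma> \<in> c" using class_ne[OF c] by (elim exE)
  have gO: "\<gamma> \<in> Omega n x0" using class_Omega[OF c ga] .
  have rgO: "rev0 \<gamma> \<in> Omega n x0" using rev0_Omega[OF gO n] .
  have bk: "cube_concat (rev0 \<gamma>) A1 \<in> A" if H1: "A1 \<in> pi_mult n x0 c A" and H2: "A0 \<in> A"
    and H3: "A \<in> pi_n n x0" for A A0 A1
  proof -
    have aO: "A0 \<in> Omega n x0" using class_Omega[OF H3 H2] .
    have "A1 \<in> homclass n x0 (cube_concat \<gamma> A0)" using H1 pimult_rep[OF n c H3 ga H2] by simp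
    then have a'O: "A1 \<in> Omega n x0" and h: "rel_homotopic n x0 (cube_concat \<gamma> A0) A1"
      unfolding homclass_def by auto
    have "rel_homotopic n x0 A0 (cube_concat (rev0 \<gamma>) (cube_concat \<gamma> A0))"
      using relhom_sym[OF cancel_right[OF aO gO n]] .
    moreover have "rel_homotopic n x0 (cube_concat (rev0 \<gamma>) (cube_concat \<gamma> A0)) (cube_concat (rev0 \<gamma>) A1)"
      using concat_cong[OF n relhom_refl[OF rgO] h] .
    ultimately have "rel_homotopic n x0 A0 (cube_concat (rev0 \<gamma>) A1)" by (rule relhom_trans)
    then have "cube_concat (rev0 \<gamma>) A1 \<in> homclass n x0 A0"
      unfolding homclass_def using concat_Omega[OF rgO a'O n] by auto
    then show ?thesis using class_rep[OF H3 H2] by simp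
  qed
  have "{mu n \<alpha> \<beta> | \<alpha> \<beta>. \<alpha> \<in> a \<and> \<beta> \<in> b} = {mu n \<alpha> \<beta> | \<alpha> \<beta>. \<alpha> \<in> pi_mult n x0 c a \<and> \<beta> \<in> pi_mult n x0 c b}"
  proof (intro equalityI subsetI)
    fix x assume "x \<in> {mu n \<alpha> \<beta> | \<alpha> \<beta>. \<alpha> \<in> a \<and> \<beta> \<in> b}"
    then obtain \<alpha>1 \<beta>1 where x: "x = mu n \<alpha>1 \<beta>1" and a1: "\<alpha>1 \<in> a" and b1: "\<beta>1 \<in> b" by auto
    have a1O: "\<alpha>1 \<in> Omega n x0" using class_Omega[OF a a1] .
    have b1O: "\<beta>1 \<in> Omega n x0" using class_Omega[OF b b1] .
    have "cube_concat \<gamma> \<alpha>1 \<in> pi_mult n x0 c a"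
      using pimult_rep[OF n c a ga a1] in_homclass[OF concat_Omega[OF gO a1O n]] by simp
    moreover have "cube_concat \<gamma> \<beta>1 \<in> pi_mult n x0 c b"
      using pimult_rep[OF n c b ga b1] in_homclass[OF concat_Omega[OF gO b1O n]] by simp
    moreover have "x = mu n (cube_concat \<gamma> \<alpha>1) (cube_concat \<gamma> \<beta>1)"
      using mu_left[OF a1O b1O gO n] x by simp
    ultimately show "x \<in> {mu n \<alpha> \<beta> | \<alpha> \<beta>. \<alpha> \<in> pi_mult n x0 c a \<and> \<beta> \<in> pi_mult n x0 c b}" by blast
  next
    fix x assume "x \<in> {mu n \<alpha> \<beta> | \<alpha> \<beta>. \<alpha> \<in> pi_mult n x0 c a \<and> \<beta> \<in> pi_mult n x0 c b}"
    then obtain \<alpha>1 \<beta>1 where x: "x = mu n \<alpha>1 \<beta>1" and a1: "\<alpha>1 \<in> pi_mult n x0 c a" and b1: "\<beta>1 \<in> pi_mult n x0 c b" by auto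
    have a1O: "\<alpha>1 \<in> Omega n x0" using a1 pimult_rep[OF n c a ga al] unfolding homclass_def by auto
    have b1O: "\<beta>1 \<in> Omega n x0" using b1 pimult_rep[OF n c b ga be] unfolding homclass_def by auto
    have "x = mu n (cube_concat (rev0 \<gamma>) \<alpha>1) (cube_concat (rev0 \<gamma>) \<beta>1)"
      using mu_left[OF a1O b1O rgO n] x by simp
    then show "x \<in> {mu n \<alpha> \<beta> | \<alpha> \<beta>. \<alpha> \<in> a \<and> \<beta> \<in> b}"
      using bk[OF a1 al a] bk[OF b1 be b] by blast
  qed
  then show ?thesis unfolding rho_def by simp
qed

theorem lemma4p3:
  fixes x0 :: "'a::metric_space" and n :: nat
  assumes "n \<ge> 1"
    and "a \<in> pi_n n x0" and "b \<in> pi_n n x0" and "c \<in> pi_n n x0"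
  shows "rho n a b = rho n (pi_mult n x0 a c) (pi_mult n x0 b c)
       \<and> rho n a b = rho n (pi_mult n x0 c a) (pi_mult n x0 c b)"
proof -
  have n: "0 < n" using assms(1) by simp
  show ?thesis using rho_right[OF n assms(2-4)] rho_left[OF n assms(2-4)] by simp
qed

end
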